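(* There exist context-free languages $L_1$ and $L_2$ such that $L_1 \stackrel{\rm pgi}{\leftarrow} L_1$ and $L_2 \stackrel{\rm sgi}{\leftarrow} L_2$ are not context-free.
   Context: Prefix-guided insertion: $x \stackrel{\rm pgi}{\leftarrow} y = \{ x_1 y_1 y_2 x_2 \mid x = x_1 y_1 x_2,\ y = y_1 y_2,\ y_1 \neq \varepsilon \}$. Suffix-guided insertion: $x \stackrel{\rm sgi}{\leftarrow} y = \{ x_1 y_1 y_2 x_2 \mid x = x_1 y_2 x_2,\ y = y_1 y_2,\ y_2 \neq \varepsilon \}$. Both are extended to languages by union over all pairs of strings. *)

theory Defs
  imports Main
begin

datatype ('n, 't) sym = N 'n | T 't

type_synonym ('n, 't) prod = "'n \<times> ('n, 't) sym list"

inductive derive1 :: "('n, 't) prod set \<Rightarrow> ('n, 't) sym list \<Rightarrow> ('n, 't) sym list \<Rightarrow> bool"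
  for P where
  "(A, w) \<in> P \<Longrightarrow> derive1 P (u @ [N A] @ v) (u @ w @ v)"

definition derives :: "('n, 't) prod set \<Rightarrow> ('n, 't) sym list \<Rightarrow> ('n, 't) sym list \<Rightarrow> bool" where
  "derives P = (derive1 P)\<^sup>*\<^sup>*"

definition Lang :: "('n, 't) prod set \<Rightarrow> 'n \<Rightarrow> 't list set" where
  "Lang P S = {w. derives P [N S] (map T w)}"

text \<open>A language is context-free if it is generated by a finite context-free
grammar (nonterminals w.l.o.g. natural numbers).\<close>
definition CFL :: "'t list set \<Rightarrow> bool" where
  "CFL L \<longleftrightarrow> (\<exists>(P :: (nat, 't) prod set) S. finite P \<and> L = Lang P S)"

definition pgi :: "'a list \<Rightarrow> 'a list \<Rightarrow> 'a list set" where
  "pgi x y = {x1 @ y1 @ y2 @ x2 | x1 y1 y2 x2.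
               x = x1 @ y1 @ x2 \<and> y = y1 @ y2 \<and> y1 \<noteq> []}"

definition sgi :: "'a list \<Rightarrow> 'a list \<Rightarrow> 'a list set" where
  "sgi x y = {x1 @ y1 @ y2 @ x2 | x1 y1 y2 x2.
               x = x1 @ y2 @ x2 \<and> y = y1 @ y2 \<and> y2 \<noteq> []}"

definition pgi_lang :: "'a list set \<Rightarrow> 'a list set \<Rightarrow> 'a list set" where
  "pgi_lang L1 L2 = (\<Union>x\<in>L1. \<Union>y\<in>L2. pgi x y)"

definition sgi_lang :: "'a list set \<Rightarrow> 'a list set \<Rightarrow> 'a list set" where
  "sgi_lang L1 L2 = (\<Union>x\<in>L1. \<Union>y\<in>L2. sgi x y)"

end

theory Submission
  imports Defs
begin


datatype ('n,'t) tr = Lf 't | Nd 'n "('n,'t) tr list"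

fun root :: "('n,'t) tr \<Rightarrow> ('n,'t) sym" where
  "root (Lf a) = T a" | "root (Nd A ts) = N A"

fun yield :: "('n,'t) tr \<Rightarrow> 't list" where
  "yield (Lf a) = [a]" | "yield (Nd A ts) = concat (map yield ts)"

fun isize :: "('n,'t) tr \<Rightarrow> nat" where
  "isize (Lf a) = 0" | "isize (Nd A ts) = Suc (sum_list (map isize ts))"

fun labs :: "('n,'t) tr \<Rightarrow> 'n set" where
  "labs (Lf a) = {}" | "labs (Nd A ts) = insert A (\<Union> (set (map labs ts)))"

fun rf :: "('n,'t) tr \<Rightarrow> bool" where
  "rf (Lf a) = True" | "rf (Nd A ts) = (\<forall>t\<in>set ts. A \<notin> labs t \<and> rf t)"

inductive valid :: "('n,'t) prod set \<Rightarrow> ('n,'t) tr \<Rightarrow> bool" for P where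
  vLf: "valid P (Lf a)"
| vNd: "(A, map root ts) \<in> P \<Longrightarrow> \<forall>t\<in>set ts. valid P t \<Longrightarrow> valid P (Nd A ts)"

inductive sub :: "('n,'t) tr \<Rightarrow> ('n,'t) tr \<Rightarrow> bool" where
  sub_refl: "sub t t"
| sub_step: "t \<in> set ts \<Longrightarrow> sub s t \<Longrightarrow> sub s (Nd A ts)"

lemma derive1_ctx: "derive1 P xs ys \<Longrightarrow> derive1 P (p@xs@q) (p@ys@q)"
proof (induction rule: derive1.induct)
  case (1 A w u v)
  then show ?case using derive1.intros[of A w P "p@u" "v@q"] by simp
qed

lemma pow_ctx: "(derive1 P ^^ n) xs ys \<Longrightarrow> (derive1 P ^^ n) (p@xs@q) (p@ys@q)"
proof (induction n arbitrary: ys)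
  case 0 then show ?case by simp
next
  case (Suc n)
  from Suc.prems obtain y where "(derive1 P ^^ n) xs y" "derive1 P y ys" by (rule relpowp_Suc_E)
  then show ?case using Suc.IH derive1_ctx by (metis relpowp_Suc_I)
qed

lemma pow_app: "(derive1 P ^^ m) a a' \<Longrightarrow> (derive1 P ^^ n) b b' \<Longrightarrow> (derive1 P ^^ (m+n)) (a@b) (a'@b')"
proof -
  assume 1: "(derive1 P ^^ m) a a'" and 2: "(derive1 P ^^ n) b b'"
  have "(derive1 P ^^ m) ([]@a@b) ([]@a'@b)" by (rule pow_ctx[OF 1])
  moreover have "(derive1 P ^^ n) (a'@b@[]) (a'@b'@[])" by (rule pow_ctx[OF 2])
  ultimately show ?thesis using relpowp_trans by fastforce
qed

lemma ders_ctx: "derives P xs ys \<Longrightarrow> derives P (p@xs@q) (p@ys@q)"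
  unfolding derives_def
  by (induction rule: rtranclp_induct) (auto intro: rtranclp.rtrancl_into_rtrancl derive1_ctx)

lemma forest_derive:
  "(\<forall>t\<in>set ts. (derive1 P ^^ isize t) [root t] (map T (yield t))) \<Longrightarrow>
   (derive1 P ^^ sum_list (map isize ts)) (map root ts) (map T (concat (map yield ts)))"
proof (induction ts)
  case Nil then show ?case by simp
next
  case (Cons t ts)
  then have "(derive1 P ^^ isize t) [root t] (map T (yield t))"
    "(derive1 P ^^ sum_list (map isize ts)) (map root ts) (map T (concat (map yield ts)))" by auto
  from pow_app[OF this] show ?case by simp
qed

lemma valid_derive: "valid P t \<Longrightarrow> (derive1 P ^^ isize t) [root t] (map T (yield t))"
proof (induction rule: valid.induct)
  case (vLf a) then show ?case by simp
next
  case (vNd A ts)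
  have "derive1 P ([]@[N A]@[]) ([]@map root ts@[])" using vNd.hyps(1) by (rule derive1.intros)
  then have "derive1 P [N A] (map root ts)" by simp
  moreover have "(derive1 P ^^ sum_list (map isize ts)) (map root ts) (map T (concat (map yield ts)))"
    using vNd.IH by (intro forest_derive) auto
  ultimately show ?case by (simp del: relpowp.simps add: relpowp_Suc_I2)
qed

lemma derive_tree:
  "(derive1 P ^^ n) xs (map T w) \<Longrightarrow> \<exists>ts. (\<forall>t\<in>set ts. valid P t) \<and> map root ts = xs \<and>
     concat (map yield ts) = w \<and> sum_list (map isize ts) = n"
proof (induction n arbitrary: xs)
  case 0
  then have "xs = map T w" by simp
  then show ?case by (intro exI[of _ "map Lf w"]) (auto intro: vLf simp: comp_def)
next
  case (Suc n)
  from Suc.prems obtain ys where d: "derive1 P xs ys" and r: "(derive1 P ^^ n) ys (map T w)"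
    by (rule relpowp_Suc_E2)
  from Suc.IH[OF r] obtain ts where ts: "\<forall>t\<in>set ts. valid P t" "map root ts = ys"
    "concat (map yield ts) = w" "sum_list (map isize ts) = n" by blast
  from d show ?case
  proof cases
    case (1 A rhs u v)
    have e: "map root ts = u @ (rhs @ v)" using ts(2) 1 by simp
    from e[unfolded map_eq_append_conv] obtain ts1 ts23 where sp1: "ts = ts1 @ ts23" "u = map root ts1"
      "rhs @ v = map root ts23" by (elim exE conjE)
    from sp1(3)[symmetric, unfolded map_eq_append_conv] obtain ts2 ts3 where sp2: "ts23 = ts2 @ ts3"
      "rhs = map root ts2" "v = map root ts3" by (elim exE conjE)
    from sp1 sp2 have sp: "ts = ts1 @ ts2 @ ts3" "map root ts1 = u"
      "map root ts2 = rhs" "map root ts3 = v" by auto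
    have v2: "valid P (Nd A ts2)" using ts(1) sp(1,3) 1(3) by (intro vNd) auto
    have "\<forall>t\<in>set (ts1 @ [Nd A ts2] @ ts3). valid P t" using ts(1) sp(1) v2 by auto
    moreover have "map root (ts1 @ [Nd A ts2] @ ts3) = xs" using sp 1(1) by simp
    moreover have "concat (map yield (ts1 @ [Nd A ts2] @ ts3)) = w" using ts(3) sp(1) by simp
    moreover have "sum_list (map isize (ts1 @ [Nd A ts2] @ ts3)) = Suc n" using ts(4) sp(1) by simp
    ultimately show ?thesis by blast
  qed
qed

lemma sub_valid: "sub s t \<Longrightarrow> valid P t \<Longrightarrow> valid P s"
  by (induction rule: sub.induct) (auto elim: valid.cases)

lemma labs_sub: "A \<in> labs t \<Longrightarrow> \<exists>s. sub s t \<and> root s = N A"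
proof (induction t)
  case (Lf x) then show ?case by simp
next
  case (Nd B ts)
  show ?case
  proof (cases "A = B")
    case True then show ?thesis by (intro exI[of _ "Nd B ts"]) (auto intro: sub_refl)
  next
    case False
    with Nd.prems obtain t where "t \<in> set ts" "A \<in> labs t" by auto
    with Nd.IH show ?thesis by (meson sub_step)
  qed
qed

lemma step_lemma:
  assumes v: "valid P (Nd A ts)" and t: "t \<in> set ts"
    and d: "(derive1 P ^^ n) [root t] (map T u @ [X] @ map T z)"
    and y: "yield t = u @ Y @ z" and s: "isize t = n + k"
  shows "\<exists>u' z' n'. (derive1 P ^^ Suc n') [N A] (map T u' @ [X] @ map T z') \<and>
     yield (Nd A ts) = u' @ Y @ z' \<and> isize (Nd A ts) = Suc n' + k"
proof -
  from v have p: "(A, map root ts) \<in> P" and vs: "\<forall>t\<in>set ts. valid P t" by (auto elim: valid.cases)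
  from t obtain ts1 ts2 where ts: "ts = ts1 @ t # ts2" by (meson split_list)
  have f1: "(derive1 P ^^ sum_list (map isize ts1)) (map root ts1) (map T (concat (map yield ts1)))"
    using vs ts by (intro forest_derive) (auto intro: valid_derive)
  have f2: "(derive1 P ^^ sum_list (map isize ts2)) (map root ts2) (map T (concat (map yield ts2)))"
    using vs ts by (intro forest_derive) (auto intro: valid_derive)
  have "derive1 P ([]@[N A]@[]) ([]@map root ts@[])" using p by (rule derive1.intros)
  then have d0: "derive1 P [N A] (map root ts1 @ [root t] @ map root ts2)" using ts by simp
  have "(derive1 P ^^ (sum_list (map isize ts1) + (n + sum_list (map isize ts2))))
     (map root ts1 @ [root t] @ map root ts2)
     (map T (concat (map yield ts1)) @ (map T u @ [X] @ map T z) @ map T (concat (map yield ts2)))"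
    by (intro pow_app d f1 f2)
  with d0 have "(derive1 P ^^ Suc (sum_list (map isize ts1) + (n + sum_list (map isize ts2)))) [N A]
     (map T (concat (map yield ts1) @ u) @ [X] @ map T (z @ concat (map yield ts2)))"
    by (simp del: relpowp.simps add: relpowp_Suc_I2)
  then show ?thesis
    apply (intro exI conjI)
      apply assumption
    using ts y s by auto
qed

lemma sub_derive: "sub s t \<Longrightarrow> valid P t \<Longrightarrow> \<exists>u z n. (derive1 P ^^ n) [root t] (map T u @ [root s] @ map T z)
   \<and> yield t = u @ yield s @ z \<and> isize t = n + isize s"
proof (induction rule: sub.induct)
  case (sub_refl t)
  then show ?case by (intro exI[of _ "[]"] exI[of _ 0]) auto
next
  case (sub_step t ts s A)
  have vt: "valid P t" using sub_step by (auto elim: valid.cases)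
  from sub_step.IH[OF vt] obtain u z n where "(derive1 P ^^ n) [root t] (map T u @ [root s] @ map T z)"
    "yield t = u @ yield s @ z" "isize t = n + isize s" by blast
  from step_lemma[OF sub_step.prems sub_step.hyps(1) this] obtain u' z' n' where
    h: "(derive1 P ^^ Suc n') [N A] (map T u' @ [root s] @ map T z')"
    "yield (Nd A ts) = u' @ yield s @ z'" "isize (Nd A ts) = Suc n' + isize s" by blast
  then show ?case by (intro exI[of _ u'] exI[of _ z'] exI[of _ "Suc n'"]) (simp del: relpowp.simps)
qed

lemma psub_derive: assumes "valid P (Nd A ts)" "t \<in> set ts" "sub s t"
  shows "\<exists>u z n. (derive1 P ^^ Suc n) [N A] (map T u @ [root s] @ map T z)
   \<and> yield (Nd A ts) = u @ yield s @ z \<and> isize (Nd A ts) = Suc n + isize s"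
proof -
  have vt: "valid P t" using assms by (auto elim: valid.cases)
  from sub_derive[OF assms(3) vt] obtain u z n where "(derive1 P ^^ n) [root t] (map T u @ [root s] @ map T z)"
    "yield t = u @ yield s @ z" "isize t = n + isize s" by blast
  from step_lemma[OF assms(1,2) this] show ?thesis .
qed



lemma labs_finite: "finite (labs t)"
  by (induction t) auto

lemma labs_valid: "valid P t \<Longrightarrow> labs t \<subseteq> fst ` P"
proof (induction rule: valid.induct)
  case (vLf a) then show ?case by simp
next
  case (vNd A ts)
  have "A \<in> fst ` P" using vNd.hyps(1) by (rule rev_image_eqI) simp
  moreover have "\<forall>t\<in>set ts. labs t \<subseteq> fst ` P" using vNd.IH by blast
  ultimately show ?case by auto
qed

lemma sum_list_le: "(\<forall>x\<in>set xs. f x \<le> (M::nat)) \<Longrightarrow> sum_list (map f xs) \<le> length xs * M"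
  by (induction xs) auto

lemma bound: "valid P t \<Longrightarrow> rf t \<Longrightarrow> (\<forall>p\<in>P. length (snd p) \<le> m) \<Longrightarrow> 1 \<le> m \<Longrightarrow>
   length (yield t) \<le> m ^ card (labs t)"
proof (induction rule: valid.induct)
  case (vLf a) then show ?case by simp
next
  case (vNd A ts)
  let ?K = "card (labs (Nd A ts))"
  have fin: "finite (labs (Nd A ts))" by (rule labs_finite)
  have K: "?K \<ge> 1" using fin by (simp add: card_gt_0_iff Suc_le_eq)
  have each: "\<forall>t\<in>set ts. length (yield t) \<le> m ^ (?K - 1)"
  proof
    fix t assume t: "t \<in> set ts"
    have rt0: "A \<notin> labs t \<and> rf t" using vNd.prems(1) t by simp
    then have rt: "rf t" "A \<notin> labs t" by blast+
    have "rf t \<longrightarrow> (\<forall>p\<in>P. length (snd p) \<le> m) \<longrightarrow> 1 \<le> m \<longrightarrow> length (yield t) \<le> m ^ card (labs t)"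
      using vNd.IH t by blast
    then have IH: "length (yield t) \<le> m ^ card (labs t)" using rt(1) vNd.prems(2,3) by blast
    have "labs t \<subseteq> labs (Nd A ts) - {A}" using t rt(2) by auto
    then have "card (labs t) \<le> card (labs (Nd A ts) - {A})" using fin by (intro card_mono) auto
    also have "\<dots> = ?K - 1" by (intro card_Diff_singleton) simp
    finally have "m ^ card (labs t) \<le> m ^ (?K - 1)" using vNd.prems(3) by (intro power_increasing)
    with IH show "length (yield t) \<le> m ^ (?K - 1)" by simp
  qed
  have "length (yield (Nd A ts)) = sum_list (map (\<lambda>t. length (yield t)) ts)"
    by (simp add: length_concat comp_def)
  also have "\<dots> \<le> length ts * m ^ (?K - 1)" using each by (rule sum_list_le)
  also have "\<dots> \<le> m * m ^ (?K - 1)"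
  proof (rule mult_right_mono)
    have "length (snd (A, map root ts)) \<le> m" using vNd.prems(2) vNd.hyps(1) by blast
    then show "length ts \<le> m" by simp
  qed simp
  also have "\<dots> = m ^ Suc (?K - 1)" by simp
  also have "\<dots> = m ^ ?K" using K by simp
  finally show ?case .
qed

lemma not_rf: "\<not> rf t \<Longrightarrow> \<exists>B ts ti s2. sub (Nd B ts) t \<and> ti \<in> set ts \<and> sub s2 ti \<and> root s2 = N B"
proof (induction t)
  case (Lf x) then show ?case by simp
next
  case (Nd A ts)
  from Nd.prems have "\<not> (\<forall>t\<in>set ts. A \<notin> labs t \<and> rf t)" by (simp only: rf.simps not_False_eq_True)
  then obtain ti where ti: "ti \<in> set ts" "A \<in> labs ti \<or> \<not> rf ti" by auto
  show ?case
  proof (cases "A \<in> labs ti")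
    case True
    from labs_sub[OF True] obtain s where s: "sub s ti" "root s = N A" by (elim exE conjE)
    have "sub (Nd A ts) (Nd A ts)" by (rule sub_refl)
    with ti(1) s show ?thesis by (intro exI[of _ A] exI[of _ ts] exI[of _ ti] exI[of _ s] conjI)
  next
    case False
    with ti have "\<not> rf ti" by blast
    from Nd.IH[OF ti(1) this] obtain B ts' tj s2 where h: "sub (Nd B ts') ti" "tj \<in> set ts'"
      "sub s2 tj" "root s2 = N B" by (elim exE conjE)
    have "sub (Nd B ts') (Nd A ts)" using ti(1) h(1) by (rule sub_step)
    with h(2-4) show ?thesis by (intro exI[of _ B] exI[of _ ts'] exI[of _ tj] exI[of _ s2] conjI)
  qed
qed

theorem pumping:
  assumes fin: "finite P"
  shows "\<exists>c. \<forall>w \<in> Lang P S. c < length w \<longrightarrow> (\<exists>u v x y z. w = u@v@x@y@z \<and> v@y \<noteq> [] \<and>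
     u@x@z \<in> Lang P S \<and> u@v@v@x@y@y@z \<in> Lang P S)"
proof -
  define m where "m = Suc (\<Sum>p\<in>P. length (snd p))"
  have m1: "1 \<le> m" unfolding m_def by simp
  have mP: "\<forall>p\<in>P. length (snd p) \<le> m"
  proof
    fix p assume "p \<in> P"
    then have "length (snd p) \<le> (\<Sum>p\<in>P. length (snd p))" using fin by (intro member_le_sum) auto
    then show "length (snd p) \<le> m" unfolding m_def by simp
  qed
  show ?thesis
  proof (intro exI[of _ "m ^ card (fst ` P)"] ballI impI)
    fix w assume wL: "w \<in> Lang P S" and lw: "m ^ card (fst ` P) < length w"
    from wL have "\<exists>n. (derive1 P ^^ n) [N S] (map T w)"
      unfolding Lang_def derives_def by (simp add: rtranclp_power)
    define n0 where "n0 = (LEAST n. (derive1 P ^^ n) [N S] (map T w))"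
    have dn0: "(derive1 P ^^ n0) [N S] (map T w)"
      unfolding n0_def using \<open>\<exists>n. _\<close> by (rule LeastI_ex)
    from derive_tree[OF dn0] obtain ts where ts: "\<forall>t\<in>set ts. valid P t" "map root ts = [N S]"
      "concat (map yield ts) = w" "sum_list (map isize ts) = n0" by (elim exE conjE)
    from ts(2) obtain t where tt: "ts = [t]" by (cases ts) auto
    have vt: "valid P t" and rt: "root t = N S" and yt: "yield t = w" and st: "isize t = n0"
      using ts tt by auto
    have "\<not> rf t"
    proof
      assume "rf t"
      then have "length (yield t) \<le> m ^ card (labs t)" using bound[OF vt _ mP m1] by simp
      also have "\<dots> \<le> m ^ card (fst ` P)"
        using labs_valid[OF vt] fin m1 by (intro power_increasing card_mono) auto
      finally show False using lw yt by simp
    qed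
    from not_rf[OF this] obtain B ts' ti s2 where s: "sub (Nd B ts') t" "ti \<in> set ts'" "sub s2 ti" "root s2 = N B"
      by (elim exE conjE)
    have vs1: "valid P (Nd B ts')" using s(1) vt by (rule sub_valid)
    have vs2: "valid P s2" using sub_valid[OF s(3)] vs1 s(2) by (auto elim: valid.cases)
    from sub_derive[OF s(1) vt] obtain u z n1 where
      d1': "(derive1 P ^^ n1) [root t] (map T u @ [root (Nd B ts')] @ map T z)"
      and y1': "yield t = u @ yield (Nd B ts') @ z" and i1': "isize t = n1 + isize (Nd B ts')"
      by (elim exE conjE)
    have d1: "(derive1 P ^^ n1) [N S] (map T u @ [N B] @ map T z)" using d1' rt by simp
    have y1: "w = u @ yield (Nd B ts') @ z" using y1' yt by simp
    have i1: "n0 = n1 + isize (Nd B ts')" using i1' st by simp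
    from psub_derive[OF vs1 s(2) s(3)] obtain v y n2 where
      d2': "(derive1 P ^^ Suc n2) [N B] (map T v @ [root s2] @ map T y)"
      and y2: "yield (Nd B ts') = v @ yield s2 @ y" and i2: "isize (Nd B ts') = Suc n2 + isize s2"
      by (elim exE conjE)
    have d2: "(derive1 P ^^ Suc n2) [N B] (map T v @ [N B] @ map T y)" using d2' s(4) by (simp del: relpowp.simps)
    define x where "x = yield s2"
    have d3: "(derive1 P ^^ isize s2) [N B] (map T x)"
      using valid_derive[OF vs2] s(4) unfolding x_def by simp
    have w: "w = u @ v @ x @ y @ z" using y1 y2 x_def by simp
    have D1: "derives P [N S] (map T u @ [N B] @ map T z)"
      using d1 unfolding derives_def by (rule relpowp_imp_rtranclp)
    have D2: "derives P [N B] (map T v @ [N B] @ map T y)"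
      using d2 unfolding derives_def by (rule relpowp_imp_rtranclp)
    have D3: "derives P [N B] (map T x)"
      using d3 unfolding derives_def by (rule relpowp_imp_rtranclp)
    have vy: "v @ y \<noteq> []"
    proof
      assume "v @ y = []"
      then have "(derive1 P ^^ (n1 + isize s2)) [N S] (map T u @ map T x @ map T z)"
        using relpowp_trans[OF d1 pow_ctx[OF d3, of "map T u" "map T z"]] by simp
      then have "(derive1 P ^^ (n1 + isize s2)) [N S] (map T w)" using w \<open>v @ y = []\<close> by simp
      then have "n0 \<le> n1 + isize s2" unfolding n0_def by (rule Least_le)
      then show False using i1 i2 by simp
    qed
    have tr: "derives P a b \<Longrightarrow> derives P b c \<Longrightarrow> derives P a c" for a b c
      unfolding derives_def by (rule rtranclp_trans)
    have "derives P [N S] (map T u @ map T x @ map T z)"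
      using tr[OF D1 ders_ctx[OF D3]] .
    then have L0: "u@x@z \<in> Lang P S" unfolding Lang_def by simp
    have "derives P [N S] (map T u @ (map T v @ [N B] @ map T y) @ map T z)"
      using tr[OF D1 ders_ctx[OF D2]] .
    then have X1: "derives P [N S] ((map T u @ map T v) @ [N B] @ (map T y @ map T z))" by simp
    have X2: "derives P [N S] ((map T u @ map T v) @ (map T v @ [N B] @ map T y) @ (map T y @ map T z))"
      by (rule tr[OF X1 ders_ctx[OF D2]])
    then have X3: "derives P [N S] ((map T u @ map T v @ map T v) @ [N B] @ (map T y @ map T y @ map T z))"
      by simp
    have "derives P [N S] ((map T u @ map T v @ map T v) @ map T x @ (map T y @ map T y @ map T z))"
      by (rule tr[OF X3 ders_ctx[OF D3]])
    then have L2: "u@v@v@x@y@y@z \<in> Lang P S" unfolding Lang_def by simp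
    show "\<exists>u v x y z. w = u@v@x@y@z \<and> v@y \<noteq> [] \<and> u@x@z \<in> Lang P S \<and> u@v@v@x@y@y@z \<in> Lang P S"
      using w vy L0 L2 by (intro exI[of _ u] exI[of _ v] exI[of _ x] exI[of _ y] exI[of _ z] conjI)
  qed
qed



lemma cnt_rep[simp]: "count_list (replicate n a) b = (if a = b then n else 0)"
  by (induction n) auto

lemma L_pre: "p @ q = X @ s # Y \<Longrightarrow> s \<notin> set p \<Longrightarrow> \<exists>t. X = p @ t"
proof (cases "length p \<le> length X")
  case True
  assume e: "p @ q = X @ s # Y"
  have "take (length p) (p @ q) = take (length p) (X @ s # Y)" using e by simp
  then have "p = take (length p) X" using True by simp
  then show ?thesis by (metis append_take_drop_id)
next
  case False
  assume e: "p @ q = X @ s # Y" and s: "s \<notin> set p"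
  have "(p @ q) ! length X = s" using e by simp
  then have "p ! length X = s" using False by (simp add: nth_append)
  then have "s \<in> set p" using False by (metis not_le nth_mem)
  with s show ?thesis by simp
qed

lemma L_suf: "p @ q = X @ s # Y \<Longrightarrow> s \<notin> set q \<Longrightarrow> \<exists>t. Y = t @ q"
proof -
  assume e: "p @ q = X @ s # Y" and s: "s \<notin> set q"
  have "rev q @ rev p = rev Y @ s # rev X" using arg_cong[OF e, of rev] by simp
  from L_pre[OF this] s obtain t where "rev Y = rev q @ t" by auto
  then have "Y = rev t @ q" by (metis rev_append rev_rev_ident)
  then show ?thesis by blast
qed

lemma fac_split: "X @ s # Y = p @ v @ q \<Longrightarrow> s \<notin> set v \<Longrightarrow>
   (\<exists>p' q'. X = p' @ v @ q') \<or> (\<exists>p' q'. Y = p' @ v @ q')"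
proof -
  assume e: "X @ s # Y = p @ v @ q" and s: "s \<notin> set v"
  consider "length p + length v \<le> length X" | "length X < length p" |
    "length p \<le> length X" "length X < length p + length v" by linarith
  then show ?thesis
  proof cases
    case 1
    have "take (length p + length v) (X @ s # Y) = take (length p + length v) (p @ v @ q)" using e by simp
    then have "take (length p + length v) X = p @ v" using 1 by simp
    then have "X = p @ v @ drop (length p + length v) X" by (metis append.assoc append_take_drop_id)
    then show ?thesis by blast
  next
    case 2
    have "drop (Suc (length X)) (X @ s # Y) = drop (Suc (length X)) (p @ v @ q)" using e by simp
    then have "Y = drop (Suc (length X)) p @ v @ q" using 2 by simp
    then show ?thesis by blast
  next
    case 3
    have "(X @ s # Y) ! length X = (p @ v @ q) ! length X" using e by simp
    moreover have "(p @ v @ q) ! length X = (v @ q) ! (length X - length p)"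
      using 3 by (intro nth_append_right) simp
    moreover have "(v @ q) ! (length X - length p) = v ! (length X - length p)"
      using 3 by (intro nth_append_left) linarith
    ultimately have "s = v ! (length X - length p)" by simp
    moreover have "length X - length p < length v" using 3 by linarith
    ultimately have "s \<in> set v" by simp
    with s show ?thesis by simp
  qed
qed

lemma fac_rep: "replicate n l = p @ v @ q \<Longrightarrow> set v \<subseteq> {l}"
  by (metis Un_iff insert_iff set_append set_replicate_Suc set_replicate_conv_if empty_iff subsetI)

definition W :: "nat \<Rightarrow> nat list" where
  "W n = replicate n 0 @ [3] @ replicate n 1 @ [4] @ replicate n 2"

lemma single_kind: "W n = p @ v @ q \<Longrightarrow> 3 \<notin> set v \<Longrightarrow> 4 \<notin> set v \<Longrightarrow> \<exists>l. set v \<subseteq> {l}"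
proof -
  assume e: "W n = p @ v @ q" and s3: "3 \<notin> set v" and s4: "4 \<notin> set v"
  have "replicate n 0 @ 3 # (replicate n 1 @ 4 # replicate n 2) = p @ v @ q" using e by (simp add: W_def)
  from fac_split[OF this s3] show ?thesis
  proof
    assume "\<exists>p' q'. replicate n 0 = p' @ v @ q'"
    then obtain p' q' where "replicate n 0 = p' @ v @ q'" by blast
    from fac_rep[OF this] show ?thesis by blast
  next
    assume "\<exists>p' q'. replicate n 1 @ 4 # replicate n 2 = p' @ v @ q'"
    then obtain p' q' where "replicate n 1 @ 4 # replicate n 2 = p' @ v @ q'" by blast
    from fac_split[OF this s4] show ?thesis
    proof
      assume "\<exists>p' q'. replicate n 1 = p' @ v @ q'"
      then obtain p' q' where "replicate n 1 = p' @ v @ q'" by blast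
      from fac_rep[OF this] show ?thesis by blast
    next
      assume "\<exists>p' q'. replicate n 2 = p' @ v @ q'"
      then obtain p' q' where "replicate n 2 = p' @ v @ q'" by blast
      from fac_rep[OF this] show ?thesis by blast
    qed
  qed
qed

lemma nonCFL:
  fixes K :: "nat list set"
  assumes pos: "\<forall>r\<in>K. 1 \<le> count_list r 3 \<and> 1 \<le> count_list r 4"
  and inv: "\<forall>r\<in>K. count_list r 3 = 1 \<longrightarrow> count_list r 4 = 1 \<longrightarrow> 1 \<le> count_list r 0 \<longrightarrow>
      1 \<le> count_list r 2 \<longrightarrow> count_list r 0 = count_list r 1 \<and> count_list r 1 = count_list r 2"
  and mem: "\<forall>n. W n \<in> K"
  shows "\<not> CFL K"
proof
  assume "CFL K"
  then obtain P :: "(nat, nat) prod set" and S where fin: "finite P" and K: "K = Lang P S"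
    unfolding CFL_def by blast
  from pumping[OF fin, of S] obtain c where
    pc: "\<forall>w\<in>Lang P S. c < length w \<longrightarrow> (\<exists>u v x y z. w = u@v@x@y@z \<and> v@y \<noteq> [] \<and>
     u@x@z \<in> Lang P S \<and> u@v@v@x@y@y@z \<in> Lang P S)" by blast
  define n where "n = Suc c"
  have WL: "W n \<in> Lang P S" using mem K by simp
  have lc: "c < length (W n)" unfolding W_def n_def by simp
  have "\<exists>u v x y z. W n = u@v@x@y@z \<and> v@y \<noteq> [] \<and>
     u@x@z \<in> Lang P S \<and> u@v@v@x@y@y@z \<in> Lang P S"
    using bspec[OF pc WL] lc by (rule mp)
  then obtain u v x y z where w: "W n = u@v@x@y@z" and vy: "v@y \<noteq> []"
    and L0': "u@x@z \<in> Lang P S" and L2': "u@v@v@x@y@y@z \<in> Lang P S" by blast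
  have L0: "u@x@z \<in> K" using L0' K by simp
  have L2: "u@v@v@x@y@y@z \<in> K" using L2' K by simp
  have cW: "count_list (W n) i = (if i = 0 \<or> i = 1 \<or> i = 2 then n else if i = 3 \<or> i = 4 then 1 else 0)" for i
    unfolding W_def by auto
  have cs: "count_list (W n) i = count_list u i + count_list v i + count_list x i + count_list y i + count_list z i" for i
    using w by simp
  have "count_list v 3 = 0 \<and> count_list y 3 = 0"
    using pos L0 cs[of 3] cW[of 3] by fastforce
  moreover have "count_list v 4 = 0 \<and> count_list y 4 = 0"
    using pos L0 cs[of 4] cW[of 4] by fastforce
  ultimately have nv: "3 \<notin> set v" "4 \<notin> set v" "3 \<notin> set y" "4 \<notin> set y"
    by (auto simp: count_list_0_iff)
  define r where "r = u@v@v@x@y@y@z"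
  have rK: "r \<in> K" using L2 r_def by simp
  have cr: "count_list r i = count_list (W n) i + count_list v i + count_list y i" for i
    using cs[of i] unfolding r_def by simp
  have v0: "count_list v i = 0" "count_list y i = 0" if "i = 3 \<or> i = 4" for i
    using nv that by (auto simp: count_list_0_iff)
  have r3: "count_list r 3 = 1" using cr[of 3] cW[of 3] v0[of 3] by simp
  have r4: "count_list r 4 = 1" using cr[of 4] cW[of 4] v0[of 4] by simp
  have r0: "1 \<le> count_list r 0" using cr[of 0] cW[of 0] by (simp add: n_def)
  have r2: "1 \<le> count_list r 2" using cr[of 2] cW[of 2] by (simp add: n_def)
  have eq: "count_list r 0 = count_list r 1 \<and> count_list r 1 = count_list r 2"
    using inv rK r3 r4 r0 r2 by blast
  then have eq': "count_list (v@y) 0 = count_list (v@y) 1 \<and> count_list (v@y) 1 = count_list (v@y) 2"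
    using cr[of 0] cr[of 1] cr[of 2] cW[of 0] cW[of 1] cW[of 2] by simp
  from vy obtain l where l: "l \<in> set (v@y)" by (metis ex_in_conv set_empty)
  have "l \<in> set (W n)" using l w by auto
  then have "l \<in> {0,1,2,3,4}" unfolding W_def by (auto split: if_splits)
  then have "l \<in> {0,1,2}" using l nv by auto
  have "0 < count_list (v@y) l" using l by (metis count_list_0_iff gr0I)
  then have "0 < count_list (v@y) 0" "0 < count_list (v@y) 1" "0 < count_list (v@y) 2"
    using eq' \<open>l \<in> {0,1,2}\<close> by auto
  then have "0 \<in> set (v@y)" "1 \<in> set (v@y)" "2 \<in> set (v@y)"
    by (metis count_notin less_irrefl)+
  then have k: "0 \<in> set v \<union> set y" "1 \<in> set v \<union> set y" "2 \<in> set v \<union> set y"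
    by auto
  obtain a where a: "set v \<subseteq> {a}" using single_kind[of n u v "x@y@z"] w nv by auto
  obtain b where b: "set y \<subseteq> {b}" using single_kind[of n "u@v@x" y z] w nv by auto
  from k a b have "(0::nat) \<in> {a,b}" "(1::nat) \<in> {a,b}" "(2::nat) \<in> {a,b}" by auto
  then show False by auto
qed



definition w1 :: "nat \<Rightarrow> nat list" where "w1 n = replicate n 0 @ [3] @ replicate n 1 @ [4]"
definition w2 :: "nat \<Rightarrow> nat list" where "w2 n = [3] @ replicate n 1 @ [4] @ replicate n 2"
definition LL :: "nat list set" where "LL = range w1 \<union> range w2"

definition G :: "(nat, nat) prod set" where
  "G = {(0, [N 1, T 4]), (1, [T 0, N 1, T 1]), (1, [T 3]), (0, [T 3, N 2]), (2, [T 1, N 2, T 2]), (2, [T 4])}"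

lemma noN: "u @ [N A] @ v \<noteq> map T p"
proof
  assume "u @ [N A] @ v = map T p"
  then have "N A \<in> set (map T p)" by (metis append_Cons in_set_conv_decomp)
  then show False by auto
qed

lemma uniq: assumes e: "u @ [N A] @ v = map T p @ [N B] @ map T q"
  shows "u = map T p \<and> A = B \<and> v = map T q"
proof -
  have len: "length (u @ [N A] @ v) = length (map T p @ [N B] @ map T q)" using e by (rule arg_cong)
  have l: "length u = length (map T p)"
  proof (rule ccontr)
    assume ne: "length u \<noteq> length (map T p)"
    have X0: "(u @ [N A] @ v) ! length u = N A" by simp
    have "(map T p @ [N B] @ map T q) ! length u = (u @ [N A] @ v) ! length u" by (simp only: e)
    with X0 have X: "(map T p @ [N B] @ map T q) ! length u = N A" by simp
    show False
    proof (cases "length u < length (map T p)")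
      case True
      then have "(map T p @ [N B] @ map T q) ! length u = map T p ! length u" by (simp add: nth_append_left)
      also have "\<dots> = T (p ! length u)" using True by simp
      finally show False using X by simp
    next
      case False
      with ne have gt: "length (map T p) < length u" by simp
      have lt: "length u < length (map T p @ [N B] @ map T q)" using len by simp
      define k where "k = length u - length (map T p) - 1"
      have kq: "k < length q" using lt gt unfolding k_def by simp
      have "length u = length (map T p) + 1 + k" using gt unfolding k_def by simp
      then have "(map T p @ [N B] @ map T q) ! length u = (map T q) ! k"
        by (simp add: nth_append)
      also have "(map T q) ! k = T (q ! k)" using kq by simp
      finally show False using X by simp
    qed
  qed
  from e have "u = map T p \<and> [N A] @ v = [N B] @ map T q"
    using append_eq_append_conv[of u "map T p" "[N A] @ v" "[N B] @ map T q"] l by blast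
  then show ?thesis by simp
qed

lemma noN_sym: "map T p = u @ [N A] @ v \<Longrightarrow> False"
  using noN by metis

lemma noN0: "map T p = [N A] \<Longrightarrow> False"
  using noN[of "[]" A "[]" p] by simp

lemma mapT_inj: "map T a = map T b \<Longrightarrow> a = b"
  by (induction a arbitrary: b) (auto simp: Cons_eq_map_conv)

definition Inv :: "(nat, nat) sym list \<Rightarrow> bool" where
  "Inv xs \<longleftrightarrow> xs = [N 0]
   \<or> (\<exists>n. xs = map T (replicate n 0) @ [N 1] @ map T (replicate n 1 @ [4]))
   \<or> (\<exists>n. xs = map T (w1 n))
   \<or> (\<exists>n. xs = map T ([3] @ replicate n 1) @ [N 2] @ map T (replicate n 2))
   \<or> (\<exists>n. xs = map T (w2 n))"

lemma rep_snoc: "replicate n a @ [a] = replicate (Suc n) a"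
  by (simp add: replicate_append_same)

lemma Inv_step: "derive1 G xs ys \<Longrightarrow> Inv xs \<Longrightarrow> Inv ys"
proof (induction rule: derive1.induct)
  case (1 A w u v)
  have nw1: "u @ [N A] @ v \<noteq> map T (w1 n)" for n by (rule noN)
  have nw2: "u @ [N A] @ v \<noteq> map T (w2 n)" for n by (rule noN)
  from 1(2) have D: "u @ [N A] @ v = [N 0]
   \<or> (\<exists>n. u @ [N A] @ v = map T (replicate n 0) @ [N 1] @ map T (replicate n 1 @ [4]))
   \<or> (\<exists>n. u @ [N A] @ v = map T (w1 n))
   \<or> (\<exists>n. u @ [N A] @ v = map T ([3] @ replicate n 1) @ [N 2] @ map T (replicate n 2))
   \<or> (\<exists>n. u @ [N A] @ v = map T (w2 n))" unfolding Inv_def .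
  consider "u @ [N A] @ v = [] @ [N 0] @ []"
    | n where "u @ [N A] @ v = map T (replicate n 0) @ [N 1] @ map T (replicate n 1 @ [4])"
    | n where "u @ [N A] @ v = map T ([3] @ replicate n 1) @ [N 2] @ map T (replicate n 2)"
  proof -
    show thesis using D
    proof (elim disjE exE)
      assume "u @ [N A] @ v = [N 0]" then show thesis using that(1) by simp
    next
      fix n assume "u @ [N A] @ v = map T (replicate n 0) @ [N 1] @ map T (replicate n 1 @ [4])"
      then show thesis by (rule that(2))
    next
      fix n assume "u @ [N A] @ v = map T (w1 n)" then show thesis using nw1 by blast
    next
      fix n assume "u @ [N A] @ v = map T ([3] @ replicate n 1) @ [N 2] @ map T (replicate n 2)"
      then show thesis by (rule that(3))
    next
      fix n assume "u @ [N A] @ v = map T (w2 n)" then show thesis using nw2 by blast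
    qed
  qed
  then show ?case
  proof cases
    case 1
    from uniq[of u A v "[]" 0 "[]"] 1 have "u = []" "A = 0" "v = []" by auto
    then show ?thesis using \<open>(A, w) \<in> G\<close> unfolding G_def Inv_def
      by (auto intro: exI[of _ 0])
  next
    case 2
    from uniq[OF 2] have h: "u = map T (replicate n 0)" "A = 1" "v = map T (replicate n 1 @ [4])" by auto
    from \<open>(A, w) \<in> G\<close> h(2) have "w = [T 0, N 1, T 1] \<or> w = [T 3]" unfolding G_def by auto
    then show ?thesis
    proof
      assume "w = [T 0, N 1, T 1]"
      then have "u @ w @ v = map T (replicate (Suc n) 0) @ [N 1] @ map T (replicate (Suc n) 1 @ [4])"
        using h by (simp add: replicate_append_same[symmetric])
      then show ?thesis unfolding Inv_def by blast
    next
      assume "w = [T 3]"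
      then have "u @ w @ v = map T (w1 n)" using h by (simp add: w1_def)
      then show ?thesis unfolding Inv_def by blast
    qed
  next
    case 3
    from uniq[OF 3] have h: "u = map T ([3] @ replicate n 1)" "A = 2" "v = map T (replicate n 2)" by auto
    from \<open>(A, w) \<in> G\<close> h(2) have "w = [T 1, N 2, T 2] \<or> w = [T 4]" unfolding G_def by auto
    then show ?thesis
    proof
      assume "w = [T 1, N 2, T 2]"
      then have "u @ w @ v = map T ([3] @ replicate (Suc n) 1) @ [N 2] @ map T (replicate (Suc n) 2)"
        using h by (simp add: replicate_append_same[symmetric])
      then show ?thesis unfolding Inv_def by blast
    next
      assume "w = [T 4]"
      then have "u @ w @ v = map T (w2 n)" using h by (simp add: w2_def)
      then show ?thesis unfolding Inv_def by blast
    qed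
  qed
qed

lemma Inv_derives: "derives G [N 0] xs \<Longrightarrow> Inv xs"
  unfolding derives_def
proof (induction rule: rtranclp_induct)
  case base then show ?case by (simp add: Inv_def)
next
  case (step y z) then show ?case using Inv_step by blast
qed

lemma LL_sub: "Lang G 0 \<subseteq> LL"
proof
  fix w assume "w \<in> Lang G 0"
  then have "Inv (map T w)" unfolding Lang_def using Inv_derives by blast
  then show "w \<in> LL" unfolding Inv_def
    apply (elim disjE exE)
        apply (drule noN0, simp)
       apply (drule noN_sym, simp)
      apply (drule mapT_inj, simp add: LL_def)
     apply (drule noN_sym, simp)
    apply (drule mapT_inj, simp add: LL_def)
    done
qed

lemma d1: "(A, w) \<in> G \<Longrightarrow> derives G (u @ [N A] @ v) (u @ w @ v)"
  unfolding derives_def by (rule r_into_rtranclp) (rule derive1.intros)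

lemma tr: "derives P a b \<Longrightarrow> derives P b c \<Longrightarrow> derives P a c"
  unfolding derives_def by (rule rtranclp_trans)

lemma gen1: "derives G [N 1] (map T (replicate n 0) @ [N 1] @ map T (replicate n 1))"
proof (induction n)
  case 0 then show ?case by (simp add: derives_def)
next
  case (Suc n)
  have "derives G (map T (replicate n 0) @ [N 1] @ map T (replicate n 1))
                  (map T (replicate n 0) @ [T 0, N 1, T 1] @ map T (replicate n 1))"
    by (rule d1) (simp add: G_def)
  then have "derives G [N 1] (map T (replicate n 0) @ [T 0, N 1, T 1] @ map T (replicate n 1))"
    using tr Suc.IH by blast
  then show ?case by (simp add: replicate_append_same[symmetric])
qed

lemma gen2: "derives G [N 2] (map T (replicate n 1) @ [N 2] @ map T (replicate n 2))"
proof (induction n)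
  case 0 then show ?case by (simp add: derives_def)
next
  case (Suc n)
  have "derives G (map T (replicate n 1) @ [N 2] @ map T (replicate n 2))
                  (map T (replicate n 1) @ [T 1, N 2, T 2] @ map T (replicate n 2))"
    by (rule d1) (simp add: G_def)
  then have "derives G [N 2] (map T (replicate n 1) @ [T 1, N 2, T 2] @ map T (replicate n 2))"
    using tr Suc.IH by blast
  then show ?case by (simp add: replicate_append_same[symmetric])
qed

lemma LL_sup: "LL \<subseteq> Lang G 0"
proof
  fix w assume "w \<in> LL"
  then consider n where "w = w1 n" | n where "w = w2 n" unfolding LL_def by auto
  then show "w \<in> Lang G 0"
  proof cases
    case 1
    have a: "derives G [N 0] [N 1, T 4]" using d1[of 0 "[N 1, T 4]" "[]" "[]"] by (simp add: G_def)
    have b: "derives G [N 1, T 4] (map T (replicate n 0) @ [N 1] @ (map T (replicate n 1) @ [T 4]))"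
      using ders_ctx[OF gen1, of "[]" "[T 4]" n] by simp
    have c: "derives G (map T (replicate n 0) @ [N 1] @ (map T (replicate n 1) @ [T 4]))
                       (map T (replicate n 0) @ [T 3] @ (map T (replicate n 1) @ [T 4]))"
      by (rule d1) (simp add: G_def)
    have "derives G [N 0] (map T (replicate n 0) @ [T 3] @ (map T (replicate n 1) @ [T 4]))"
      by (rule tr[OF tr[OF a b] c])
    then show ?thesis unfolding Lang_def 1 w1_def by simp
  next
    case 2
    have a: "derives G [N 0] [T 3, N 2]" using d1[of 0 "[T 3, N 2]" "[]" "[]"] by (simp add: G_def)
    have b: "derives G [T 3, N 2] (([T 3] @ map T (replicate n 1)) @ [N 2] @ map T (replicate n 2))"
      using ders_ctx[OF gen2, of "[T 3]" "[]" n] by simp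
    have c: "derives G (([T 3] @ map T (replicate n 1)) @ [N 2] @ map T (replicate n 2))
                       (([T 3] @ map T (replicate n 1)) @ [T 4] @ map T (replicate n 2))"
      by (rule d1) (simp add: G_def)
    have "derives G [N 0] (([T 3] @ map T (replicate n 1)) @ [T 4] @ map T (replicate n 2))"
      by (rule tr[OF tr[OF a b] c])
    then show ?thesis unfolding Lang_def 2 w2_def by simp
  qed
qed

lemma CFL_LL: "CFL LL"
proof -
  have "finite G" unfolding G_def by simp
  moreover have "LL = Lang G 0" using LL_sub LL_sup by blast
  ultimately show ?thesis unfolding CFL_def by blast
qed



lemma cnt_w1: "count_list (w1 n) i = (if i = 0 \<or> i = 1 then n else if i = 3 \<or> i = 4 then 1 else 0)"
  unfolding w1_def by auto
lemma cnt_w2: "count_list (w2 n) i = (if i = 1 \<or> i = 2 then n else if i = 3 \<or> i = 4 then 1 else 0)"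
  unfolding w2_def by auto

lemma LL_cases: "x \<in> LL \<Longrightarrow> (\<And>n. x = w1 n \<Longrightarrow> P) \<Longrightarrow> (\<And>n. x = w2 n \<Longrightarrow> P) \<Longrightarrow> P"
  unfolding LL_def by auto

lemma LL_34: "x \<in> LL \<Longrightarrow> count_list x 3 = 1 \<and> count_list x 4 = 1"
  by (erule LL_cases) (simp_all add: cnt_w1 cnt_w2)

lemma LL_02: "x \<in> LL \<Longrightarrow> count_list x 0 = 0 \<or> count_list x 2 = 0"
  by (erule LL_cases) (simp_all add: cnt_w1 cnt_w2)

lemma set_sub_cnt: "set a \<subseteq> {l} \<Longrightarrow> k \<noteq> l \<Longrightarrow> count_list a k = 0"
  by (auto simp: count_list_0_iff)

lemma rep_split: "replicate n l = a @ b \<Longrightarrow> set a \<subseteq> {l} \<and> set b \<subseteq> {l}"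
proof -
  assume e: "replicate n l = a @ b"
  have "set a \<union> set b = set (replicate n l)" using e by simp
  also have "\<dots> \<subseteq> {l}" by auto
  finally show ?thesis by blast
qed

abbreviation cnt where "cnt xs i \<equiv> count_list xs i"

lemma pgi_inv:
  assumes x: "x \<in> LL" and y: "y \<in> LL" and r: "r = x1@y1@y2@x2" and ex: "x = x1@y1@x2" and ey: "y = y1@y2"
    and c3: "cnt r 3 = 1" and c4: "cnt r 4 = 1" and c0: "1 \<le> cnt r 0" and c2: "1 \<le> cnt r 2"
  shows "cnt r 0 = cnt r 1 \<and> cnt r 1 = cnt r 2"
proof -
  have rc: "cnt r i = cnt x1 i + cnt y1 i + cnt y2 i + cnt x2 i" for i using r by simp
  have xc: "cnt x i = cnt x1 i + cnt y1 i + cnt x2 i" for i using ex by simp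
  have yc: "cnt y i = cnt y1 i + cnt y2 i" for i using ey by simp
  have x34: "cnt x 3 = 1" "cnt x 4 = 1" using LL_34[OF x] by auto
  have y34: "cnt y 3 = 1" "cnt y 4 = 1" using LL_34[OF y] by auto
  have z: "cnt y2 3 = 0" "cnt y2 4 = 0" "cnt x2 4 = 0" "cnt x1 3 = 0"
    using rc[of 3] rc[of 4] xc[of 3] xc[of 4] yc[of 3] yc[of 4] x34 y34 c3 c4 by simp_all
  have n4y2: "4 \<notin> set y2" "4 \<notin> set x2" "3 \<notin> set x1" using z by (simp_all add: count_list_0_iff)
  from y show ?thesis
  proof (rule LL_cases)
    fix m assume ym: "y = w1 m"
    have ey0: "y1 @ y2 = w1 m" using ey ym by simp
    have "y1 @ y2 = w1 m" using ey0 by simp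
    also have "w1 m = (replicate m 0 @ 3 # replicate m 1) @ 4 # []" unfolding w1_def by simp
    finally have "y1 @ y2 = (replicate m 0 @ 3 # replicate m 1) @ 4 # []" .
    from L_suf[OF this n4y2(1)] obtain t where "[] = t @ y2" by (rule exE)
    then have "y2 = []" by simp
    then have "cnt r i = cnt x i" for i using rc xc by simp
    then have "1 \<le> cnt x 0" "1 \<le> cnt x 2" using c0 c2 by auto
    with LL_02[OF x] show ?thesis by simp
  next
    fix m assume ym: "y = w2 m"
    have y0: "cnt y 0 = 0" "cnt y 1 = m" "cnt y 2 = m" using ym by (simp_all add: cnt_w2)
    have "cnt x 0 \<ge> 1" using rc[of 0] xc[of 0] yc[of 0] y0 c0 by simp
    then have "\<exists>n. x = w1 n" using x by (auto simp: LL_def cnt_w2)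
    then obtain n where xn: "x = w1 n" by blast
    have x0: "cnt x 0 = n" "cnt x 1 = n" "cnt x 2 = 0" using xn by (simp_all add: cnt_w1)
    have ex0: "x1 @ y1 @ x2 = w1 n" using ex xn by simp
    have "(x1 @ y1) @ x2 = w1 n" using ex0 by simp
    also have "w1 n = (replicate n 0 @ 3 # replicate n 1) @ 4 # []" unfolding w1_def by simp
    finally have "(x1 @ y1) @ x2 = (replicate n 0 @ 3 # replicate n 1) @ 4 # []" .
    from L_suf[OF this n4y2(2)] obtain t where "[] = t @ x2" by (rule exE)
    then have x2n: "x2 = []" by simp
    have "x1 @ (y1 @ x2) = w1 n" using ex0 by simp
    also have "w1 n = replicate n 0 @ 3 # (replicate n 1 @ [4])" unfolding w1_def by simp
    finally have "x1 @ (y1 @ x2) = replicate n 0 @ 3 # (replicate n 1 @ [4])" .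
    from L_pre[OF this n4y2(3)] obtain t where "replicate n 0 = x1 @ t" by (rule exE)
    then have "set x1 \<subseteq> {0}" by (rule rep_split[THEN conjunct1])
    then have x11: "cnt x1 1 = 0" by (rule set_sub_cnt) simp
    have ey0: "y1 @ y2 = w2 m" using ey ym by simp
    have "y1 @ y2 = w2 m" using ey0 by simp
    also have "w2 m = ([3] @ replicate m 1) @ 4 # replicate m 2" unfolding w2_def by simp
    finally have "y1 @ y2 = ([3] @ replicate m 1) @ 4 # replicate m 2" .
    from L_suf[OF this n4y2(1)] obtain t where "replicate m 2 = t @ y2" by (rule exE)
    then have "set y2 \<subseteq> {2}" by (rule rep_split[THEN conjunct2])
    then have y21: "cnt y2 1 = 0" "cnt y2 0 = 0" by (auto intro: set_sub_cnt)
    have "cnt y1 1 = m" using yc[of 1] y0 y21 by simp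
    then have nm: "n = m" using xc[of 1] x0 x11 x2n by simp
    have "cnt r 0 = n" using rc[of 0] xc[of 0] x0 y21 x2n by simp
    moreover have "cnt r 1 = n" using rc[of 1] xc[of 1] yc[of 1] x0 y0 x11 x2n nm by simp
    moreover have "cnt r 2 = n" using rc[of 2] xc[of 2] yc[of 2] x0 y0 x2n nm by simp
    ultimately show ?thesis by simp
  qed
qed

lemma sgi_inv:
  assumes x: "x \<in> LL" and y: "y \<in> LL" and r: "r = x1@y1@y2@x2" and ex: "x = x1@y2@x2" and ey: "y = y1@y2"
    and c3: "cnt r 3 = 1" and c4: "cnt r 4 = 1" and c0: "1 \<le> cnt r 0" and c2: "1 \<le> cnt r 2"
  shows "cnt r 0 = cnt r 1 \<and> cnt r 1 = cnt r 2"
proof -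
  have rc: "cnt r i = cnt x1 i + cnt y1 i + cnt y2 i + cnt x2 i" for i using r by simp
  have xc: "cnt x i = cnt x1 i + cnt y2 i + cnt x2 i" for i using ex by simp
  have yc: "cnt y i = cnt y1 i + cnt y2 i" for i using ey by simp
  have x34: "cnt x 3 = 1" "cnt x 4 = 1" using LL_34[OF x] by auto
  have y34: "cnt y 3 = 1" "cnt y 4 = 1" using LL_34[OF y] by auto
  have z: "cnt y1 3 = 0" "cnt x1 3 = 0" "cnt x2 4 = 0"
    using rc[of 3] rc[of 4] xc[of 3] xc[of 4] yc[of 3] yc[of 4] x34 y34 c3 c4 by simp_all
  have n3: "3 \<notin> set y1" "3 \<notin> set x1" "4 \<notin> set x2" using z by (simp_all add: count_list_0_iff)
  from y show ?thesis
  proof (rule LL_cases)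
    fix m assume ym: "y = w2 m"
    have ey0: "y1 @ y2 = w2 m" using ey ym by simp
    have "y1 @ y2 = w2 m" using ey0 by simp
    also have "w2 m = [] @ 3 # (replicate m 1 @ 4 # replicate m 2)" unfolding w2_def by simp
    finally have "y1 @ y2 = [] @ 3 # (replicate m 1 @ 4 # replicate m 2)" .
    from L_pre[OF this n3(1)] obtain t where "[] = y1 @ t" by (rule exE)
    then have "y1 = []" by simp
    then have "cnt r i = cnt x i" for i using rc xc by simp
    then have "1 \<le> cnt x 0" "1 \<le> cnt x 2" using c0 c2 by auto
    with LL_02[OF x] show ?thesis by simp
  next
    fix m assume ym: "y = w1 m"
    have y0: "cnt y 0 = m" "cnt y 1 = m" "cnt y 2 = 0" using ym by (simp_all add: cnt_w1)
    have "cnt x 2 \<ge> 1" using rc[of 2] xc[of 2] yc[of 2] y0 c2 by simp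
    then have "\<exists>n. x = w2 n" using x by (auto simp: LL_def cnt_w1)
    then obtain n where xn: "x = w2 n" by blast
    have x0: "cnt x 0 = 0" "cnt x 1 = n" "cnt x 2 = n" using xn by (simp_all add: cnt_w2)
    have ex0: "x1 @ y2 @ x2 = w2 n" using ex xn by simp
    have "x1 @ (y2 @ x2) = w2 n" using ex0 by simp
    also have "w2 n = [] @ 3 # (replicate n 1 @ 4 # replicate n 2)" unfolding w2_def by simp
    finally have "x1 @ (y2 @ x2) = [] @ 3 # (replicate n 1 @ 4 # replicate n 2)" .
    from L_pre[OF this n3(2)] obtain t where "[] = x1 @ t" by (rule exE)
    then have x1n: "x1 = []" by simp
    have ey0: "y1 @ y2 = w1 m" using ey ym by simp
    have "y1 @ y2 = w1 m" using ey0 by simp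
    also have "w1 m = replicate m 0 @ 3 # (replicate m 1 @ [4])" unfolding w1_def by simp
    finally have "y1 @ y2 = replicate m 0 @ 3 # (replicate m 1 @ [4])" .
    from L_pre[OF this n3(1)] obtain t where "replicate m 0 = y1 @ t" by (rule exE)
    then have "set y1 \<subseteq> {0}" by (rule rep_split[THEN conjunct1])
    then have y11: "cnt y1 1 = 0" by (rule set_sub_cnt) simp
    have "(x1 @ y2) @ x2 = w2 n" using ex0 by simp
    also have "w2 n = ([3] @ replicate n 1) @ 4 # replicate n 2" unfolding w2_def by simp
    finally have "(x1 @ y2) @ x2 = ([3] @ replicate n 1) @ 4 # replicate n 2" .
    from L_suf[OF this n3(3)] obtain t where "replicate n 2 = t @ x2" by (rule exE)
    then have "set x2 \<subseteq> {2}" by (rule rep_split[THEN conjunct2])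
    then have x21: "cnt x2 1 = 0" "cnt x2 0 = 0" by (auto intro: set_sub_cnt)
    have "cnt y2 1 = m" using yc[of 1] y0 y11 by simp
    then have nm: "n = m" using xc[of 1] x0 x1n x21 by simp
    have "cnt r 0 = m" using rc[of 0] xc[of 0] yc[of 0] x0 y0 x1n x21 by simp
    moreover have "cnt r 1 = m" using rc[of 1] xc[of 1] yc[of 1] x0 y0 x1n x21 y11 nm by simp
    moreover have "cnt r 2 = m" using rc[of 2] xc[of 2] yc[of 2] x0 y0 x1n nm by simp
    ultimately show ?thesis by simp
  qed
qed

lemma pos_lemma: "y \<in> LL \<Longrightarrow> y = y1 @ y2 \<Longrightarrow> 1 \<le> cnt (x1@y1@y2@x2) 3 \<and> 1 \<le> cnt (x1@y1@y2@x2) 4"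
  using LL_34[of y] by auto

lemma pgi_facts: "r \<in> pgi_lang LL LL \<Longrightarrow> \<exists>x y x1 y1 y2 x2. x \<in> LL \<and> y \<in> LL \<and> r = x1@y1@y2@x2 \<and> x = x1@y1@x2 \<and> y = y1@y2"
  unfolding pgi_lang_def pgi_def by blast

lemma sgi_facts: "r \<in> sgi_lang LL LL \<Longrightarrow> \<exists>x y x1 y1 y2 x2. x \<in> LL \<and> y \<in> LL \<and> r = x1@y1@y2@x2 \<and> x = x1@y2@x2 \<and> y = y1@y2"
  unfolding sgi_lang_def sgi_def by blast

lemma W_pgi: "W n \<in> pgi_lang LL LL"
proof -
  have "W n \<in> pgi (w1 n) (w2 n)"
    unfolding pgi_def W_def w1_def w2_def
    by (rule CollectI, rule exI[of _ "replicate n 0"], rule exI[of _ "[3] @ replicate n 1 @ [4]"],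
        rule exI[of _ "replicate n 2"], rule exI[of _ "[]"]) simp
  moreover have "w1 n \<in> LL" "w2 n \<in> LL" unfolding LL_def by auto
  ultimately show ?thesis unfolding pgi_lang_def by blast
qed

lemma W_sgi: "W n \<in> sgi_lang LL LL"
proof -
  have "W n \<in> sgi (w2 n) (w1 n)"
    unfolding sgi_def W_def w1_def w2_def
    by (rule CollectI, rule exI[of _ "[]"], rule exI[of _ "replicate n 0"],
        rule exI[of _ "[3] @ replicate n 1 @ [4]"], rule exI[of _ "replicate n 2"]) simp
  moreover have "w1 n \<in> LL" "w2 n \<in> LL" unfolding LL_def by auto
  ultimately show ?thesis unfolding sgi_lang_def by blast
qed

theorem corollary5p2:
  shows "\<exists>(L1 :: nat list set) (L2 :: nat list set).
           CFL L1 \<and> CFL L2 \<and> \<not> CFL (pgi_lang L1 L1) \<and> \<not> CFL (sgi_lang L2 L2)"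
proof -
  have "\<not> CFL (pgi_lang LL LL)"
  proof (rule nonCFL)
    show "\<forall>r\<in>pgi_lang LL LL. 1 \<le> count_list r 3 \<and> 1 \<le> count_list r 4"
      using pgi_facts pos_lemma by metis
    show "\<forall>r\<in>pgi_lang LL LL. count_list r 3 = 1 \<longrightarrow> count_list r 4 = 1 \<longrightarrow> 1 \<le> count_list r 0 \<longrightarrow>
      1 \<le> count_list r 2 \<longrightarrow> count_list r 0 = count_list r 1 \<and> count_list r 1 = count_list r 2"
    proof (intro ballI impI)
      fix r assume "r \<in> pgi_lang LL LL" "cnt r 3 = 1" "cnt r 4 = 1" "1 \<le> cnt r 0" "1 \<le> cnt r 2"
      then show "cnt r 0 = cnt r 1 \<and> cnt r 1 = cnt r 2" using pgi_facts pgi_inv by metis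
    qed
    show "\<forall>n. W n \<in> pgi_lang LL LL" using W_pgi by blast
  qed
  moreover have "\<not> CFL (sgi_lang LL LL)"
  proof (rule nonCFL)
    show "\<forall>r\<in>sgi_lang LL LL. 1 \<le> count_list r 3 \<and> 1 \<le> count_list r 4"
      using sgi_facts pos_lemma by metis
    show "\<forall>r\<in>sgi_lang LL LL. count_list r 3 = 1 \<longrightarrow> count_list r 4 = 1 \<longrightarrow> 1 \<le> count_list r 0 \<longrightarrow>
      1 \<le> count_list r 2 \<longrightarrow> count_list r 0 = count_list r 1 \<and> count_list r 1 = count_list r 2"
    proof (intro ballI impI)
      fix r assume "r \<in> sgi_lang LL LL" "cnt r 3 = 1" "cnt r 4 = 1" "1 \<le> cnt r 0" "1 \<le> cnt r 2"
      then show "cnt r 0 = cnt r 1 \<and> cnt r 1 = cnt r 2" using sgi_facts sgi_inv by metis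
    qed
    show "\<forall>n. W n \<in> sgi_lang LL LL" using W_sgi by blast
  qed
  ultimately show ?thesis using CFL_LL by blast
qed


end
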